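(* Let $\Delta \ge 2$ be an integer and let $\varepsilon > 0$. There is no local algorithm that, on every $2$-coloured graph $\mathcal{G}$ of maximum degree at most $\Delta$ (with the colouring given as input), outputs a dominating set $D$ of $\mathcal{G}$ with $|D| \le \bigl(\tfrac{\Delta+1}{2}-\varepsilon\bigr)\,|D^*|$, where $D^*$ is a minimum dominating set of $\mathcal{G}$. This holds even if the nodes have unique identifiers from $\{1,\dots,|V|\}$, know $|V|$, and messages and local computation are unbounded.
   Context: Model: a graph $\mathcal{G}=(V,E)$ without isolated nodes is a distributed system; every node runs the same deterministic algorithm. Communication is synchronous: in each round every node receives messages from its neighbours, performs local computation, and sends messages to its neighbours. Each node knows its degree, its own input label (e.g. its colour), and the global degree bound $\Delta$. A local algorithm is one that terminates after $T$ rounds, where $T$ may depend on $\Delta$ but not on the number of nodes; its output at a node is whether the node belongs to the solution (for edge problems, which incident edges belong to it). A $2$-colouring assigns each node black or white so that adjacent nodes have different colours; it is given as input (each node knows its colour). An algorithm has approximation factor $\alpha$ for a minimisation problem if its output is always feasible with size at most $\alpha$ times the optimum. *)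

theory Defs
  imports Main "HOL.Real"
begin

definition nbrs :: "nat set \<Rightarrow> (nat \<Rightarrow> nat \<Rightarrow> bool) \<Rightarrow> nat \<Rightarrow> nat set" where
  "nbrs V E v = {u \<in> V. E v u}"

definition deg :: "nat set \<Rightarrow> (nat \<Rightarrow> nat \<Rightarrow> bool) \<Rightarrow> nat \<Rightarrow> nat" where
  "deg V E v = card (nbrs V E v)"

definition graph_ok :: "nat \<Rightarrow> nat set \<Rightarrow> (nat \<Rightarrow> nat \<Rightarrow> bool) \<Rightarrow> bool" where
  "graph_ok \<Delta> V E \<longleftrightarrow> finite V \<and>
     (\<forall>u v. E u v \<longrightarrow> u \<in> V \<and> v \<in> V \<and> u \<noteq> v \<and> E v u) \<and>
     (\<forall>v \<in> V. 1 \<le> deg V E v \<and> deg V E v \<le> \<Delta>)"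

text \<open>Proper 2-colouring (True = black, False = white).\<close>
definition proper_2col :: "nat set \<Rightarrow> (nat \<Rightarrow> nat \<Rightarrow> bool) \<Rightarrow> (nat \<Rightarrow> bool) \<Rightarrow> bool" where
  "proper_2col V E col \<longleftrightarrow> (\<forall>u \<in> V. \<forall>v \<in> V. E u v \<longrightarrow> col u \<noteq> col v)"

definition valid_ids :: "nat set \<Rightarrow> (nat \<Rightarrow> nat) \<Rightarrow> bool" where
  "valid_ids V idf \<longleftrightarrow> inj_on idf V \<and> idf ` V = {1..card V}"

definition port_numbering :: "nat set \<Rightarrow> (nat \<Rightarrow> nat \<Rightarrow> bool) \<Rightarrow> (nat \<Rightarrow> nat \<Rightarrow> nat) \<Rightarrow> bool" where
  "port_numbering V E p \<longleftrightarrow> (\<forall>v \<in> V. bij_betw (p v) {..<deg V E v} (nbrs V E v))"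

definition back_port :: "nat set \<Rightarrow> (nat \<Rightarrow> nat \<Rightarrow> bool) \<Rightarrow> (nat \<Rightarrow> nat \<Rightarrow> nat) \<Rightarrow> nat \<Rightarrow> nat \<Rightarrow> nat" where
  "back_port V E p v i = (THE j. j < deg V E (p v i) \<and> p (p v i) j = v)"

definition dominating :: "nat set \<Rightarrow> (nat \<Rightarrow> nat \<Rightarrow> bool) \<Rightarrow> nat set \<Rightarrow> bool" where
  "dominating V E D \<longleftrightarrow> D \<subseteq> V \<and> (\<forall>v \<in> V. v \<in> D \<or> (\<exists>u \<in> D. E u v))"

definition domination_number :: "nat set \<Rightarrow> (nat \<Rightarrow> nat \<Rightarrow> bool) \<Rightarrow> nat" where
  "domination_number V E = Min {card D | D. dominating V E D}"

text \<open>A deterministic algorithm with arbitrary (unbounded) local states 's and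
messages 'm.  Initial state depends on Delta, the node's degree, its colour,
its identifier and the number of nodes |V|.  In each round a node sends
a_send s i to the neighbour behind port i, then updates its state from the
vector of received messages (indexed by its own ports; None beyond its degree).\<close>
record ('s, 'm) algorithm =
  a_init :: "nat \<Rightarrow> nat \<Rightarrow> bool \<Rightarrow> nat \<Rightarrow> nat \<Rightarrow> 's"
  a_send :: "'s \<Rightarrow> nat \<Rightarrow> 'm"
  a_step :: "'s \<Rightarrow> (nat \<Rightarrow> 'm option) \<Rightarrow> 's"
  a_out  :: "'s \<Rightarrow> bool"

fun run :: "('s, 'm) algorithm \<Rightarrow> nat \<Rightarrow> nat set \<Rightarrow> (nat \<Rightarrow> nat \<Rightarrow> bool) \<Rightarrow>
            (nat \<Rightarrow> nat \<Rightarrow> nat) \<Rightarrow> (nat \<Rightarrow> bool) \<Rightarrow> (nat \<Rightarrow> nat) \<Rightarrow> nat \<Rightarrow> nat \<Rightarrow> 's" where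
  "run A \<Delta> V E p col idf 0 v = a_init A \<Delta> (deg V E v) (col v) (idf v) (card V)"
| "run A \<Delta> V E p col idf (Suc t) v =
     a_step A (run A \<Delta> V E p col idf t v)
       (\<lambda>i. if i < deg V E v
            then Some (a_send A (run A \<Delta> V E p col idf t (p v i)) (back_port V E p v i))
            else None)"

definition local_output :: "('s, 'm) algorithm \<Rightarrow> nat \<Rightarrow> nat set \<Rightarrow> (nat \<Rightarrow> nat \<Rightarrow> bool) \<Rightarrow>
            (nat \<Rightarrow> nat \<Rightarrow> nat) \<Rightarrow> (nat \<Rightarrow> bool) \<Rightarrow> (nat \<Rightarrow> nat) \<Rightarrow> nat \<Rightarrow> nat set" where
  "local_output A \<Delta> V E p col idf T = {v \<in> V. a_out A (run A \<Delta> V E p col idf T v)}"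

end

theory Submission imports Defs "HOL-Library.Ramsey" begin

definition LE :: "nat \<Rightarrow> nat \<Rightarrow> nat \<Rightarrow> nat \<Rightarrow> bool" where
 "LE D n i j \<longleftrightarrow> i < n \<and> j < n \<and> ((even i \<and> odd j \<and> i < j \<and> j < i + 2*D) \<or> (even j \<and> odd i \<and> j < i \<and> i < j + 2*D))"

definition LP :: "nat \<Rightarrow> nat \<Rightarrow> nat" where
 "LP i k = (if even i then i + (2*k+1) else i - (2*k+1))"

definition cnt :: "nat \<Rightarrow> nat \<Rightarrow> nat \<Rightarrow> nat" where
 "cnt D n i = (if even i then min D ((n - i) div 2) else min D ((i+1) div 2))"

lemma nbrs_LE: assumes "i < n" shows "nbrs {..<n} (LE D n) i = LP i ` {..<cnt D n i}"
proof (cases "even i")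
  case True
  show ?thesis
  proof
    show "nbrs {..<n} (LE D n) i \<subseteq> LP i ` {..<cnt D n i}"
    proof
      fix j assume "j \<in> nbrs {..<n} (LE D n) i"
      then have j: "j < n" "odd j" "i < j" "j < i + 2*D" using True by (auto simp: nbrs_def LE_def)
      define k where "k = (j - i - 1) div 2"
      have "j = i + (2*k+1)" using j True unfolding k_def by presburger
      moreover have "k < cnt D n i" using j True unfolding k_def cnt_def by (auto; presburger)
      ultimately show "j \<in> LP i ` {..<cnt D n i}" using True unfolding LP_def by auto
    qed
  next
    show "LP i ` {..<cnt D n i} \<subseteq> nbrs {..<n} (LE D n) i"
    proof
      fix j assume "j \<in> LP i ` {..<cnt D n i}"
      then obtain k where k: "k < cnt D n i" "j = i + (2*k+1)" using True by (auto simp: LP_def)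
      have "k < D" "2*k+1 < n - i" using k True by (auto simp: cnt_def)
      then show "j \<in> nbrs {..<n} (LE D n) i" using k True by (auto simp: nbrs_def LE_def)
    qed
  qed
next
  case False
  show ?thesis
  proof
    show "nbrs {..<n} (LE D n) i \<subseteq> LP i ` {..<cnt D n i}"
    proof
      fix j assume "j \<in> nbrs {..<n} (LE D n) i"
      then have j: "j < n" "even j" "j < i" "i < j + 2*D" using False by (auto simp: nbrs_def LE_def)
      define k where "k = (i - j - 1) div 2"
      have "j = i - (2*k+1)" using j False unfolding k_def by presburger
      moreover have "k < cnt D n i" using j False unfolding k_def cnt_def by (auto; presburger)
      ultimately show "j \<in> LP i ` {..<cnt D n i}" using False unfolding LP_def by auto
    qed
  next
    show "LP i ` {..<cnt D n i} \<subseteq> nbrs {..<n} (LE D n) i"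
    proof
      fix j assume "j \<in> LP i ` {..<cnt D n i}"
      then obtain k where k: "k < cnt D n i" "j = i - (2*k+1)" using False by (auto simp: LP_def)
      have k2: "k < D" "k < (i+1) div 2" using k False by (auto simp: cnt_def)
      have "2*k+1 \<le> i" using k2(2) False by presburger
      note k2 this
      then show "j \<in> nbrs {..<n} (LE D n) i" using k False assms by (auto simp: nbrs_def LE_def)
    qed
  qed
qed

lemma inj_LP: "inj_on (LP i) {..<cnt D n i}"
proof (cases "even i")
  case True
  then show ?thesis by (auto simp: inj_on_def LP_def)
next
  case False
  show ?thesis
  proof (rule inj_onI)
    fix k k' assume a: "k \<in> {..<cnt D n i}" "k' \<in> {..<cnt D n i}" "LP i k = LP i k'"
    have h1: "k < (i+1) div 2" "k' < (i+1) div 2" using a False by (auto simp: cnt_def)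
    have "2*k+1 \<le> i" using h1(1) False by presburger
    moreover have "2*k'+1 \<le> i" using h1(2) False by presburger
    ultimately
    show "k = k'" using a(3) False by (simp add: LP_def)
  qed
qed

lemma deg_LE: "i < n \<Longrightarrow> deg {..<n} (LE D n) i = cnt D n i"
  using nbrs_LE[of i n D] inj_LP[of i D n] by (simp add: deg_def card_image)

lemma cnt_ge1: assumes "i < n" "even n" "D \<ge> 1" shows "1 \<le> cnt D n i"
proof (cases "even i")
  case True
  then have "n - i \<ge> 2" using assms by presburger
  then show ?thesis using True assms by (simp add: cnt_def)
next
  case False
  then have "i \<ge> 1" by presburger
  then show ?thesis using False assms by (simp add: cnt_def)
qed

lemma cnt_le: "cnt D n i \<le> D" by (simp add: cnt_def)

lemma graph_ok_LE: assumes "even n" "D \<ge> 1" shows "graph_ok D {..<n} (LE D n)"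
  unfolding graph_ok_def using assms cnt_ge1 cnt_le deg_LE by (auto simp: LE_def)

lemma col_LE: "proper_2col {..<n} (LE D n) even"
  unfolding proper_2col_def by (auto simp: LE_def)

lemma port_LE: "port_numbering {..<n} (LE D n) LP"
  unfolding port_numbering_def using deg_LE nbrs_LE inj_LP by (simp add: bij_betw_def)

definition full :: "nat \<Rightarrow> nat \<Rightarrow> nat \<Rightarrow> bool" where
  "full D n v \<longleftrightarrow> 2*D \<le> v \<and> v + 2*D < n"

lemma cnt_full: assumes "full D n v" shows "cnt D n v = D"
  using assms unfolding full_def cnt_def by auto

lemma LP_int: "i < D \<Longrightarrow> 2*D \<le> v \<Longrightarrow> int (LP v i) = int v + (if even v then int (2*i+1) else - int (2*i+1))"
  by (auto simp: LP_def)

lemma back_LE: assumes "full D n v" "i < D" shows "back_port {..<n} (LE D n) LP v i = i"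
proof -
  let ?u = "LP v i"
  have un: "?u < n" and ud: "deg {..<n} (LE D n) ?u = D"
  proof -
    show "?u < n" using assms by (auto simp: full_def LP_def)
    then show "deg {..<n} (LE D n) ?u = D" using assms deg_LE[of ?u n D]
      by (auto simp: full_def LP_def cnt_def)
  qed
  have bk: "LP ?u i = v" using assms by (auto simp: full_def LP_def)
  show ?thesis unfolding back_port_def
  proof (rule the_equality)
    show "i < deg {..<n} (LE D n) ?u \<and> LP ?u i = v" using ud bk assms by simp
  next
    fix j assume "j < deg {..<n} (LE D n) ?u \<and> LP ?u j = v"
    then have "j < D" "LP ?u j = v" using ud by auto
    then show "j = i" using bk assms by (auto simp: full_def LP_def split: if_splits)
  qed
qed


definition good :: "nat \<Rightarrow> nat \<Rightarrow> nat \<Rightarrow> nat \<Rightarrow> bool" where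
  "good D n t v \<longleftrightarrow> (t+1)*(2*D) \<le> v \<and> v + (t+1)*(2*D) < n"

lemma good_full: "good D n t v \<Longrightarrow> full D n v"
proof -
  assume a: "good D n t v"
  have "2*D \<le> (t+1)*(2*D)" by simp
  then show ?thesis using a unfolding good_def full_def by linarith
qed

lemma good_nb: assumes "good D n (Suc t) v" "i < D" shows "good D n t (LP v i)"
proof -
  have e: "(Suc t + 1)*(2*D) = (t+1)*(2*D) + 2*D" by (simp add: algebra_simps)
  have "2*i+1 < 2*D" using assms(2) by simp
  then show ?thesis using assms(1) unfolding good_def LP_def e by auto
qed

lemma transl:
  assumes "good D n t v" "good D n t v'" "even v = even v'"
    "\<forall>d::int. \<bar>d\<bar> \<le> int (t*(2*D)) \<longrightarrow> idf (nat (int v + d)) = idf' (nat (int v' + d))"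
  shows "run A D {..<n} (LE D n) LP even idf t v = run A D {..<n} (LE D n) LP even idf' t v'"
  using assms
proof (induction t arbitrary: v v')
  case 0
  have "v < n" "v' < n" using 0(1,2) by (auto simp: good_def)
  then have "deg {..<n} (LE D n) v = D" "deg {..<n} (LE D n) v' = D"
    using 0(1,2) good_full[of D n 0] cnt_full[of D n] deg_LE[of _ n D] by auto
  moreover have "idf (nat (int v + 0)) = idf' (nat (int v' + 0))" using 0(4) by simp
  then have "idf v = idf' v'" by simp
  ultimately show ?case using 0 by simp
next
  case (Suc t)
  have vn: "v < n" "v' < n" using Suc(2,3) by (auto simp: good_def)
  have fv: "full D n v" "full D n v'" using Suc(2,3) good_full by blast+
  have dg: "deg {..<n} (LE D n) v = D" "deg {..<n} (LE D n) v' = D"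
    using vn fv cnt_full[of D n] deg_LE[of _ n D] by auto
  have st: "run A D {..<n} (LE D n) LP even idf t v = run A D {..<n} (LE D n) LP even idf' t v'"
  proof (rule Suc.IH)
    show "good D n t v" "good D n t v'" using Suc(2,3) by (auto simp: good_def)
    show "even v = even v'" by fact
    show "\<forall>d::int. \<bar>d\<bar> \<le> int (t*(2*D)) \<longrightarrow> idf (nat (int v + d)) = idf' (nat (int v' + d))"
    proof (intro allI impI)
      fix d :: int assume "\<bar>d\<bar> \<le> int (t*(2*D))"
      moreover have "int (t*(2*D)) \<le> int (Suc t*(2*D))" by simp
      ultimately show "idf (nat (int v + d)) = idf' (nat (int v' + d))" using Suc(5) by (meson order_trans)
    qed
  qed
  have nb: "run A D {..<n} (LE D n) LP even idf t (LP v i) = run A D {..<n} (LE D n) LP even idf' t (LP v' i)"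
    if i: "i < D" for i
  proof (rule Suc.IH)
    show "good D n t (LP v i)" "good D n t (LP v' i)" using Suc(2,3) good_nb i by blast+
    show "even (LP v i) = even (LP v' i)" using Suc(4) by (simp add: LP_def)
    have "2*D \<le> v" "2*D \<le> v'" using fv by (auto simp: full_def)
    then have e: "int (LP v i) = int v + (if even v then int (2*i+1) else - int (2*i+1))"
      "int (LP v' i) = int v' + (if even v then int (2*i+1) else - int (2*i+1))"
      using LP_int[of i D v] LP_int[of i D v'] i Suc(4) by auto
    show "\<forall>d::int. \<bar>d\<bar> \<le> int (t*(2*D)) \<longrightarrow> idf (nat (int (LP v i) + d)) = idf' (nat (int (LP v' i) + d))"
    proof (intro allI impI)
      fix d :: int assume d: "\<bar>d\<bar> \<le> int (t*(2*D))"
      define s where "s = (if even v then int (2*i+1) else - int (2*i+1))"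
      have s1: "\<bar>s\<bar> \<le> 2 * int D" using i unfolding s_def by auto
      have s2: "int (Suc t*(2*D)) = int (t*(2*D)) + 2*int D" by (simp add: algebra_simps)
      have "\<bar>s + d\<bar> \<le> \<bar>s\<bar> + \<bar>d\<bar>" by (rule abs_triangle_ineq)
      then have "\<bar>s + d\<bar> \<le> int (Suc t*(2*D))" using s1 s2 d by linarith
      then have "idf (nat (int v + (s+d))) = idf' (nat (int v' + (s+d)))" using Suc(5) by blast
      then show "idf (nat (int (LP v i) + d)) = idf' (nat (int (LP v' i) + d))"
        using e unfolding s_def by (simp add: algebra_simps)
    qed
  qed
  have bp: "back_port {..<n} (LE D n) LP v i = back_port {..<n} (LE D n) LP v' i" if "i < D" for i
    using back_LE fv that by simp
  show ?case using st nb bp dg by (simp cong: if_cong)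
qed


definition vref :: "nat \<Rightarrow> nat \<Rightarrow> bool \<Rightarrow> nat" where
  "vref D T c = (T+1)*(2*D) + (if c then 0 else 1)"

definition idfX :: "nat \<Rightarrow> nat \<Rightarrow> bool \<Rightarrow> nat set \<Rightarrow> nat \<Rightarrow> nat" where
  "idfX D T c X k = sorted_list_of_set X ! (k + T*(2*D) - vref D T c)"

definition Out :: "('s,'m) algorithm \<Rightarrow> nat \<Rightarrow> nat \<Rightarrow> nat \<Rightarrow> bool \<Rightarrow> nat set \<Rightarrow> bool" where
  "Out A D n T c X = a_out A (run A D {..<n} (LE D n) LP even (idfX D T c X) T (vref D T c))"

lemma window_out:
  assumes g: "good D n T v" and nbig: "2*((T+1)*(2*D)) + 1 < n"
    and L: "length L = 2*(T*(2*D))+1" "sorted L" "distinct L"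
    and w: "\<forall>j<length L. idf (v - T*(2*D) + j) = L!j"
  shows "a_out A (run A D {..<n} (LE D n) LP even idf T v) = Out A D n T (even v) (set L)"
proof -
  let ?c = "even v"
  let ?R = "T*(2*D)"
  have sl: "sorted_list_of_set (set L) = L" using L by (simp add: sorted_list_of_set.idem_if_sorted_distinct)
  have RC: "?R \<le> (T+1)*(2*D)" by simp
  have vR: "?R \<le> v" using g RC unfolding good_def by linarith
  have gv: "good D n T (vref D T ?c)" using nbig unfolding good_def vref_def by (auto simp: algebra_simps)
  have ev: "even (vref D T ?c) = ?c" unfolding vref_def by auto
  have "run A D {..<n} (LE D n) LP even idf T v = run A D {..<n} (LE D n) LP even (idfX D T ?c (set L)) T (vref D T ?c)"
  proof (rule transl[OF g gv ev[symmetric]])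
    show "\<forall>d::int. \<bar>d\<bar> \<le> int (T*(2*D)) \<longrightarrow> idf (nat (int v + d)) = idfX D T ?c (set L) (nat (int (vref D T ?c) + d))"
    proof (intro allI impI)
      fix d :: int assume d0: "\<bar>d\<bar> \<le> int ?R"
      obtain R where R: "R = ?R" by simp
      have d: "\<bar>d\<bar> \<le> int R" using d0 R by simp
      have lL: "length L = 2*R+1" using L(1) R by simp
      define j where "j = nat (int R + d)"
      have jl: "j < length L" using d lL unfolding j_def by auto
      have vR': "R \<le> v" using vR R by simp
      have "nat (int v + d) = v - R + j" using d vR' unfolding j_def by auto
      then have 1: "idf (nat (int v + d)) = L!j" using w jl R by simp
      have vr: "R \<le> vref D T ?c" using RC R unfolding vref_def by linarith
      have "nat (int (vref D T ?c) + d) + R - vref D T ?c = j" using d vr unfolding j_def by auto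
      then have 2: "idfX D T ?c (set L) (nat (int (vref D T ?c) + d)) = L!j"
        unfolding idfX_def sl R by simp
      show "idf (nat (int v + d)) = idfX D T ?c (set L) (nat (int (vref D T ?c) + d))" using 1 2 by simp
    qed
  qed
  then show ?thesis unfolding Out_def by simp
qed


definition hom :: "(nat set \<Rightarrow> nat) \<Rightarrow> nat \<Rightarrow> nat set \<Rightarrow> bool" where
  "hom f r H \<longleftrightarrow> (\<exists>i. \<forall>Y\<in>[H]\<^bsup>r\<^esup>. f Y = i)"

lemma ramsey_set:
  assumes P: "partn_lst {..<N} [m,m,m,m] r" and U: "finite U" "N \<le> card U" and f: "\<forall>X. f X < (4::nat)"
  shows "\<exists>H. H \<subseteq> U \<and> card H = m \<and> hom f r H"
proof -
  obtain g where g: "g ` {..<N} \<subseteq> U" "inj_on g {..<N}"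
    using card_le_inj[of "{..<N}" U] U by auto
  have ff: "f \<circ> (\<lambda>X. g ` X) \<in> [{..<N}]\<^bsup>r\<^esup> \<rightarrow> {..<4}" using f by auto
  obtain i H' where i: "i < length [m,m,m,m]" and H': "H' \<in> [{..<N}]\<^bsup>([m,m,m,m]!i)\<^esup>"
     and hf: "(f \<circ> (\<lambda>X. g ` X)) ` ([H']\<^bsup>r\<^esup>) \<subseteq> {i}"
    using partn_lstE[OF P ff] by auto
  have "i = 0 \<or> i = 1 \<or> i = 2 \<or> i = 3" using i by auto
  then have mi: "[m,m,m,m]!i = m" by auto
  have H'1: "H' \<subseteq> {..<N}" "card H' = m" using H' mi by (auto simp: nsets_def)
  have ig: "inj_on g H'" using g(2) H'1(1) inj_on_subset by blast
  show ?thesis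
  proof (intro exI conjI)
    show "g ` H' \<subseteq> U" using g(1) H'1(1) by blast
    show "card (g ` H') = m" using ig H'1 card_image by metis
    show "hom f r (g ` H')" unfolding hom_def
    proof (intro exI ballI)
      fix Y assume Y: "Y \<in> [g ` H']\<^bsup>r\<^esup>"
      obtain X where X: "X \<in> [H']\<^bsup>r\<^esup>" "Y = g ` X" using nset_image_obtains[OF Y ig] by blast
      then show "f Y = i" using hf by auto
    qed
  qed
qed

lemma extract_blocks:
  assumes P: "partn_lst {..<N} [m,m,m,m] r" and f: "\<forall>X. f X < (4::nat)" and m: "0 < m"
  shows "finite U \<Longrightarrow> \<exists>Ls rest. distinct (concat Ls @ rest) \<and> set (concat Ls @ rest) = U \<and> length rest < N \<and>
           (\<forall>L\<in>set Ls. sorted L \<and> distinct L \<and> length L = m \<and> hom f r (set L))"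
proof (induction "card U" arbitrary: U rule: less_induct)
  case less
  show ?case
  proof (cases "card U < N")
    case True
    then show ?thesis using less.prems
      by (intro exI[of _ "[]"] exI[of _ "sorted_list_of_set U"]) auto
  next
    case False
    then obtain H where H: "H \<subseteq> U" "card H = m" "hom f r H"
      using ramsey_set[OF P less.prems] f by (meson not_le)
    have fH: "finite H" using H less.prems finite_subset by blast
    have cH: "card H \<le> card U" using card_mono less.prems H(1) by blast
    have "card (U - H) = card U - card H" using card_Diff_subset[OF fH H(1)] .
    then have "card (U - H) < card U" using cH H(2) m by linarith
    then obtain Ls rest where IH: "distinct (concat Ls @ rest)" "set (concat Ls @ rest) = U - H" "length rest < N"
         "\<forall>L\<in>set Ls. sorted L \<and> distinct L \<and> length L = m \<and> hom f r (set L)"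
      using less.hyps[of "U - H"] less.prems by blast
    let ?L = "sorted_list_of_set H"
    show ?thesis
    proof (intro exI[of _ "?L # Ls"] exI[of _ rest] conjI)
      show "distinct (concat (?L # Ls) @ rest)" using IH(1,2) fH by auto
      show "set (concat (?L # Ls) @ rest) = U" using IH(2) H(1) fH by auto
      show "length rest < N" by fact
      show "\<forall>L\<in>set (?L # Ls). sorted L \<and> distinct L \<and> length L = m \<and> hom f r (set L)"
        using IH(4) H fH by auto
    qed
  qed
qed


lemma nth_blocks:
  "(\<forall>L\<in>set Ls. length L = m) \<Longrightarrow> s < length Ls \<Longrightarrow> j < m \<Longrightarrow> (concat Ls @ rest) ! (s*m + j) = Ls!s!j"
proof (induction Ls arbitrary: s)
  case Nil then show ?case by simp
next
  case (Cons L Ls)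
  show ?case
  proof (cases s)
    case 0 then show ?thesis using Cons.prems by (simp add: nth_append)
  next
    case (Suc s')
    have "(concat (L#Ls) @ rest) ! (s*m + j) = (concat Ls @ rest) ! (s'*m + j)"
      using Cons.prems Suc by (simp add: nth_append algebra_simps)
    also have "\<dots> = Ls!s'!j" using Cons Suc by simp
    finally show ?thesis using Suc by simp
  qed
qed

lemma length_blocks: "(\<forall>L\<in>set Ls. length L = m) \<Longrightarrow> length (concat Ls) = length Ls * m"
  by (induction Ls) auto

lemma gamma_bound:
  assumes n: "n = Q * (2*D+2)" and D: "1 \<le> D"
  shows "domination_number {..<n} (LE D n) \<le> 2*Q"
proof -
  define P where "P = 2*D+2"
  define Dm where "Dm = (\<lambda>q. q*P) ` {..<Q} \<union> (\<lambda>q. q*P + (P - 1)) ` {..<Q}"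
  have cD: "card Dm \<le> 2*Q"
  proof -
    have "card Dm \<le> card ((\<lambda>q. q*P) ` {..<Q}) + card ((\<lambda>q. q*P + (P - 1)) ` {..<Q})"
      unfolding Dm_def by (rule card_Un_le)
    also have "\<dots> \<le> Q + Q" by (intro add_mono) (metis card_image_le card_lessThan finite_lessThan)+
    finally show ?thesis by simp
  qed
  have Pe: "even P" unfolding P_def by simp
  have dom: "dominating {..<n} (LE D n) Dm"
    unfolding dominating_def
  proof (intro conjI ballI)
    show "Dm \<subseteq> {..<n}"
    proof
      fix x assume "x \<in> Dm"
      then obtain q where q: "q < Q" "x = q*P \<or> x = q*P + (P - 1)" unfolding Dm_def by auto
      have "Suc q * P \<le> Q * P" using q(1) by (meson Suc_leI mult_le_mono1)
      then show "x \<in> {..<n}" using q n unfolding P_def by auto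
    qed
  next
    fix v assume "v \<in> {..<n}"
    then have vn: "v < n" by simp
    define q where "q = v div P"
    define \<rho> where "\<rho> = v mod P"
    have v: "v = q*P + \<rho>" unfolding q_def \<rho>_def by simp
    have rP: "\<rho> < P" unfolding \<rho>_def P_def by simp
    have qQ: "q < Q" using vn n unfolding q_def P_def by (simp add: less_mult_imp_div_less)
    have qP: "q*P + P \<le> n" using qQ n unfolding P_def by (metis Suc_leI mult_Suc mult_le_mono1 add.commute)
    have eqP: "even (q*P)" using Pe by simp
    show "v \<in> Dm \<or> (\<exists>u\<in>Dm. LE D n u v)"
    proof (cases "\<rho> = 0 \<or> \<rho> = P - 1")
      case True
      then have "v \<in> Dm" using v qQ unfolding Dm_def by auto
      then show ?thesis by simp
    next
      case False
      show ?thesis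
      proof (cases "odd \<rho>")
        case True
        have "LE D n (q*P) v"
          unfolding LE_def using v eqP True False rP qP vn unfolding P_def by (auto; presburger)
        moreover have "q*P \<in> Dm" using qQ unfolding Dm_def by auto
        ultimately show ?thesis by blast
      next
        case ev: False
        have "LE D n (q*P + (P - 1)) v"
          unfolding LE_def using v eqP ev False rP qP vn unfolding P_def by (auto; presburger)
        moreover have "q*P + (P - 1) \<in> Dm" using qQ unfolding Dm_def by auto
        ultimately show ?thesis by blast
      qed
    qed
  qed
  have fin: "finite {card X |X. dominating {..<n} (LE D n) X}"
  proof -
    have "{card X |X. dominating {..<n} (LE D n) X} \<subseteq> card ` Pow {..<n}"
      by (auto simp: dominating_def)
    then show ?thesis by (rule finite_subset) simp
  qed
  have "domination_number {..<n} (LE D n) \<le> card Dm"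
    unfolding domination_number_def using fin dom by (intro Min_le) auto
  then show ?thesis using cD by simp
qed


definition col4 :: "('s,'m) algorithm \<Rightarrow> nat \<Rightarrow> nat \<Rightarrow> nat \<Rightarrow> nat set \<Rightarrow> nat" where
  "col4 A D n T X = (if Out A D n T True X then 2 else 0) + (if Out A D n T False X then 1 else 0)"

lemma col4_lt: "col4 A D n T X < 4" unfolding col4_def by auto

lemma col4_dec: "Out A D n T c X = (if c then 2 \<le> col4 A D n T X else odd (col4 A D n T X))"
  unfolding col4_def by auto

lemma block_claim:
  fixes A :: "('s,'m) algorithm"
  assumes D: "1 \<le> D" and mM: "m = 2*M" and MC: "(T+1)*(2*D) + 2*D < M"
    and nbig: "2*((T+1)*(2*D)) + 1 < n"
    and Ls: "\<forall>L\<in>set Ls. sorted L \<and> distinct L \<and> length L = m \<and> hom (col4 A D n T) (2*(T*(2*D))+1) (set L)"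
    and kn: "length Ls * m \<le> n"
    and dom: "dominating {..<n} (LE D n) (local_output A D {..<n} (LE D n) LP even (\<lambda>i. (concat Ls @ rest) ! i) T)"
    and s: "s < length Ls"
  shows "\<exists>\<delta>::nat. \<delta> \<le> 1 \<and> (\<forall>j < M - (T+1)*(2*D). s*m + ((T+1)*(2*D) + 2*j + \<delta>) \<in>
            local_output A D {..<n} (LE D n) LP even (\<lambda>i. (concat Ls @ rest) ! i) T)"
proof -
  let ?idf = "\<lambda>i. (concat Ls @ rest) ! i"
  let ?Ds = "local_output A D {..<n} (LE D n) LP even ?idf T"
  obtain C where C: "C = (T+1)*(2*D)" by simp
  obtain R where R: "R = T*(2*D)" by simp
  have RC: "R + 2*D = C" using C R by (simp add: algebra_simps)
  have Ce: "even C" using C by simp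
  let ?L = "Ls!s"
  have L: "sorted ?L" "distinct ?L" "length ?L = m" "hom (col4 A D n T) (2*R+1) (set ?L)"
    using Ls s R by auto
  obtain i where i: "\<forall>Y\<in>nsets (set ?L) (2*R+1). col4 A D n T Y = i" using L(4) unfolding hom_def by blast
  have sm: "s*m + m \<le> n"
  proof -
    have "Suc s * m \<le> length Ls * m" using s by (meson Suc_leI mult_le_mono1)
    then show ?thesis using kn by simp
  qed
  have me: "even m" using mM by simp
  have key: "s*m + x \<in> ?Ds \<longleftrightarrow> (if even x then 2 \<le> i else odd i)" if x: "C \<le> x" "x + C < m" for x
  proof -
    let ?v = "s*m + x"
    have vn: "?v < n" using x sm by linarith
    have gv: "good D n T ?v" unfolding good_def using x sm C by linarith
    let ?Lw = "take (2*R+1) (drop (x - R) ?L)"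
    have xr: "x - R + (2*R+1) \<le> m" using x RC D by linarith
    have lw: "length ?Lw = 2*(T*(2*D))+1" using xr L(3) R by simp
    have sw: "sorted ?Lw" "distinct ?Lw" using L by (auto simp: sorted_wrt_take sorted_wrt_drop)
    have ww: "\<forall>j<length ?Lw. ?idf (?v - T*(2*D) + j) = ?Lw!j"
    proof (intro allI impI)
      fix j assume j: "j < length ?Lw"
      have j': "j < 2*R+1" using j lw R by simp
      have "?v - T*(2*D) + j = s*m + (x - R + j)" using x RC R by linarith
      moreover have "x - R + j < m" using xr j' by linarith
      ultimately have "?idf (?v - T*(2*D) + j) = ?L ! (x - R + j)"
        using nth_blocks[of Ls m s "x - R + j" rest] Ls s by (simp add: add.assoc)
      also have "\<dots> = ?Lw ! j" using j' xr L(3) by simp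
      finally show "?idf (?v - T*(2*D) + j) = ?Lw!j" .
    qed
    have out: "a_out A (run A D {..<n} (LE D n) LP even ?idf T ?v) = Out A D n T (even ?v) (set ?Lw)"
      by (rule window_out[OF gv nbig lw sw ww])
    have "set ?Lw \<in> nsets (set ?L) (2*R+1)"
      unfolding nsets_def using sw lw R distinct_card[of ?Lw]
      by (auto dest: in_set_takeD in_set_dropD)
    then have ci: "col4 A D n T (set ?Lw) = i" using i by blast
    have ev: "even ?v = even x" using me by simp
    show ?thesis using out ci ev vn col4_dec[of A D n T "even x" "set ?Lw"]
      by (simp add: local_output_def)
  qed
  have ok: "2 \<le> i \<or> odd i"
  proof (rule ccontr)
    assume no: "\<not> (2 \<le> i \<or> odd i)"
    let ?x0 = "C + 2*D"
    have x0: "C \<le> ?x0" "?x0 + C < m" using MC C mM by linarith+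
    have "even ?x0" using Ce by simp
    then have nv: "s*m + ?x0 \<notin> ?Ds" using key[OF x0] no by simp
    have "s*m + ?x0 < n" using x0 sm by linarith
    then obtain u where u: "u \<in> ?Ds" "LE D n u (s*m + ?x0)" using dom nv unfolding dominating_def by auto
    have ul: "s*m + C < u" "u < s*m + C + 4*D" using u(2) unfolding LE_def by auto
    define x' where "x' = u - s*m"
    have ux: "u = s*m + x'" "C \<le> x'" "x' + C < m" using ul MC C mM unfolding x'_def by linarith+
    have "u \<notin> ?Ds" using key[OF ux(2,3)] no ux(1) by simp
    then show False using u(1) by simp
  qed
  define \<delta> where "\<delta> = (if 2 \<le> i then 0 else 1::nat)"
  show ?thesis
  proof (intro exI conjI allI impI)
    show "\<delta> \<le> 1" unfolding \<delta>_def by simp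
    fix j assume j: "j < M - (T+1)*(2*D)"
    have j1: "j < M - C" using j C by simp
    have MC1: "C + 2*D < M" using MC C by simp
    have d1: "\<delta> \<le> 1" unfolding \<delta>_def by simp
    have x: "C \<le> C + 2*j + \<delta>" "C + 2*j + \<delta> + C < m" using j1 mM MC1 d1 by linarith+
    have "s*m + (C + 2*j + \<delta>) \<in> ?Ds" using key[OF x] ok Ce unfolding \<delta>_def by auto
    then show "s*m + ((T+1)*(2*D) + 2*j + \<delta>) \<in> ?Ds" using C by simp
  qed
qed


lemma no_alg:
  fixes A :: "('s,'m) algorithm" and e :: real
  assumes D: "2 \<le> D" and e: "0 < e" "e \<le> 1"
  and H: "\<forall>V E p col idf.
             graph_ok D V E \<and> proper_2col V E col \<and> port_numbering V E p \<and> valid_ids V idf \<longrightarrow>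
             dominating V E (local_output A D V E p col idf T) \<and>
             real (card (local_output A D V E p col idf T))
               \<le> ((real D + 1) / 2 - e) * real (domination_number V E)"
  shows False
proof -
  obtain C where C: "C = (T+1)*(2*D)" by simp
  obtain R where R: "R = T*(2*D)" by simp
  obtain M :: nat where M: "real C * (real D + 1) / e + real C + 2*real D + 1 < real M"
    using reals_Archimedean2 by blast
  define m where "m = 2*M"
  obtain N :: nat where N: "partn_lst {..<N} [m,m,m,m] (2*R+1)" using ramsey_full[of "[m,m,m,m]" "2*R+1"] by blast
  obtain Q :: nat where Q: "real N / e + real C + 2 < real Q" using reals_Archimedean2 by blast
  define n where "n = Q*(2*D+2)"
  have c0: "0 \<le> real C * (real D + 1) / e" using e by simp
  have MC0: "C + 2*D < M" using M c0 by linarith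
  then have MC: "(T+1)*(2*D) + 2*D < M" using C by simp
  have "0 \<le> real N / e" using e by simp
  then have "real (C + 2) < real Q" using Q by simp
  then have Q0: "C + 2 < Q" by (simp only: of_nat_less_iff)
  have "2*Q \<le> n" unfolding n_def by simp
  then have nbig0: "2*C + 1 < n" using Q0 by linarith
  then have nbig: "2*((T+1)*(2*D)) + 1 < n" using C by simp
  have m0: "0 < m" using MC unfolding m_def by simp
  obtain Ls rest where LR: "distinct (concat Ls @ rest)" "set (concat Ls @ rest) = {1..n}" "length rest < N"
     "\<forall>L\<in>set Ls. sorted L \<and> distinct L \<and> length L = m \<and> hom (col4 A D n T) (2*R+1) (set L)"
    using extract_blocks[OF N _ m0, of "col4 A D n T" "{1..n}"] col4_lt by blast
  let ?LL = "concat Ls @ rest"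
  define k where "k = length Ls"
  have lenLL: "length ?LL = n" using distinct_card[OF LR(1)] LR(2) by simp
  have kn: "k * m + length rest = n" using lenLL length_blocks[of Ls m] LR(4) unfolding k_def by simp
  let ?idf = "\<lambda>i. ?LL ! i"
  have vid: "valid_ids {..<n} ?idf"
    unfolding valid_ids_def
  proof
    show "inj_on ?idf {..<n}" using inj_on_nth[OF LR(1), of "{..<n}"] lenLL by simp
    have "?idf ` {..<n} = set ?LL" using lenLL by (auto simp: set_conv_nth)
    then show "?idf ` {..<n} = {1..card {..<n}}" using LR(2) by simp
  qed
  have gok: "graph_ok D {..<n} (LE D n)" using graph_ok_LE D unfolding n_def by simp
  let ?Ds = "local_output A D {..<n} (LE D n) LP even ?idf T"
  have HH: "dominating {..<n} (LE D n) ?Ds \<and>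
      real (card ?Ds) \<le> ((real D + 1) / 2 - e) * real (domination_number {..<n} (LE D n))"
    using H gok col_LE port_LE vid by blast
  have Ls': "\<forall>L\<in>set Ls. sorted L \<and> distinct L \<and> length L = m \<and> hom (col4 A D n T) (2*(T*(2*D))+1) (set L)"
    using LR(4) R by simp
  have kn': "length Ls * m \<le> n" using kn k_def by simp
  have bc: "\<forall>s<k. \<exists>\<delta>::nat. \<delta> \<le> 1 \<and> (\<forall>j < M - C. s*m + (C + 2*j + \<delta>) \<in> ?Ds)"
    using block_claim[OF _ m_def MC nbig Ls' kn' conjunct1[OF HH]] D C unfolding k_def by auto
  define dl where "dl = (\<lambda>s. SOME \<delta>::nat. \<delta> \<le> 1 \<and> (\<forall>j < M - C. s*m + (C + 2*j + \<delta>) \<in> ?Ds))"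
  have dl: "\<forall>s<k. dl s \<le> (1::nat) \<and> (\<forall>j < M - C. s*m + (C + 2*j + dl s) \<in> ?Ds)"
  proof (intro allI impI)
    fix s assume "s < k"
    then have "\<exists>\<delta>::nat. \<delta> \<le> 1 \<and> (\<forall>j < M - C. s*m + (C + 2*j + \<delta>) \<in> ?Ds)" using bc by blast
    then show "dl s \<le> (1::nat) \<and> (\<forall>j < M - C. s*m + (C + 2*j + dl s) \<in> ?Ds)"
      unfolding dl_def by (rule someI_ex)
  qed
  define \<phi> where "\<phi> = (\<lambda>(s,j). s*m + (C + 2*j + dl s))"
  have am: "C + 2*j + dl s < m" if "s < k" "j < M - C" for s j
  proof -
    have "dl s \<le> 1" using that dl by blast
    then show ?thesis using that MC0 unfolding m_def by linarith
  qed
  have inj: "inj_on \<phi> ({..<k} \<times> {..<M - C})"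
  proof (rule inj_onI)
    fix a b assume a: "a \<in> {..<k} \<times> {..<M - C}" and b: "b \<in> {..<k} \<times> {..<M - C}" and eq: "\<phi> a = \<phi> b"
    obtain s j where sj: "a = (s,j)" by force
    obtain s' j' where sj': "b = (s',j')" by force
    have r1: "C + 2*j + dl s < m" using a sj am by auto
    have r2: "C + 2*j' + dl s' < m" using b sj' am by auto
    have e1: "s*m + (C + 2*j + dl s) = s'*m + (C + 2*j' + dl s')" using eq sj sj' unfolding \<phi>_def by simp
    have "(s*m + (C + 2*j + dl s)) div m = s" using r1 by simp
    moreover have "(s'*m + (C + 2*j' + dl s')) div m = s'" using r2 by simp
    ultimately have ss: "s = s'" using e1 by simp
    then have "j = j'" using e1 by simp
    then show "a = b" using sj sj' ss by simp
  qed
  have sub: "\<phi> ` ({..<k} \<times> {..<M - C}) \<subseteq> ?Ds" using dl unfolding \<phi>_def by auto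
  have finDs: "finite ?Ds" unfolding local_output_def by simp
  have cardD: "k * (M - C) \<le> card ?Ds"
    using card_inj_on_le[OF inj sub finDs] by simp
  have gam: "domination_number {..<n} (LE D n) \<le> 2*Q" using gamma_bound[of n Q D] D unfolding n_def by simp
  have coef: "0 \<le> (real D + 1) / 2 - e" using D e by simp
  have b1: "real (card ?Ds) \<le> ((real D + 1) / 2 - e) * (2 * real Q)"
  proof -
    have "real (domination_number {..<n} (LE D n)) \<le> 2 * real Q" using gam by simp
    then have "((real D + 1) / 2 - e) * real (domination_number {..<n} (LE D n)) \<le> ((real D + 1) / 2 - e) * (2 * real Q)"
      using coef by (rule mult_left_mono)
    then show ?thesis using HH by linarith
  qed
  have b1': "real (card ?Ds) \<le> (real D + 1) * real Q - 2 * e * real Q"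
    using b1 by (simp add: algebra_simps)
  have b2: "real k * real M - real k * real C \<le> real (card ?Ds)"
  proof -
    have "real (k * (M - C)) \<le> real (card ?Ds)" using cardD by linarith
    moreover have "real (k * (M - C)) = real k * real M - real k * real C" using MC0
      by (simp add: of_nat_diff algebra_simps)
    ultimately show ?thesis by simp
  qed
  have f1: "2 * (real k * real M) + real N > real Q * (2 * real D + 2)"
  proof -
    have "k * (2*M) + N > Q*(2*D+2)" using kn LR(3) unfolding m_def n_def by linarith
    then have "real (k * (2*M) + N) > real (Q*(2*D+2))" by linarith
    then show ?thesis by (simp add: algebra_simps)
  qed
  have f2: "real k * real M \<le> real Q * (real D + 1)"
  proof -
    have "k * (2*M) \<le> Q*(2*D+2)" using kn unfolding m_def n_def by linarith
    then have "real (k * (2*M)) \<le> real (Q*(2*D+2))" by linarith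
    then show ?thesis by (simp add: algebra_simps)
  qed
  have f3: "real C * (real D + 1) < e * real M"
  proof -
    have "real C * (real D + 1) / e < real M" using M by simp
    then show ?thesis using e by (simp add: divide_less_eq mult.commute)
  qed
  have Mpos: "0 < real M" using MC0 by simp
  have f4: "real k * real C \<le> e * real Q"
  proof -
    have "real k * real C * real M = real C * (real k * real M)" by simp
    also have "\<dots> \<le> real C * (real Q * (real D + 1))" using f2 by (simp add: mult_left_mono)
    also have "\<dots> = real Q * (real C * (real D + 1))" by simp
    also have "\<dots> \<le> real Q * (e * real M)" using f3 by (simp add: mult_left_mono)
    also have "\<dots> = (e * real Q) * real M" by simp
    finally show ?thesis using Mpos by simp
  qed
  have f5: "real N < e * real Q"
  proof -
    have "real N / e < real Q" using Q by simp
    then show ?thesis using e by (simp add: divide_less_eq mult.commute)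
  qed
  have f1': "2 * (real k * real M) + real N > 2 * (real Q * (real D + 1))"
    using f1 by (simp add: algebra_simps)
  have f5': "0 \<le> e * real Q" using e by simp
  have x1: "(real D + 1) * real Q = real Q * (real D + 1)" by (simp add: mult.commute)
  have x2: "2 * e * real Q = 2 * (e * real Q)" by simp
  show False using b1' b2 f1' f4 f5 f5' x1 x2 by linarith
qed


theorem theorem3:
  fixes \<Delta> :: nat and \<epsilon> :: real
  assumes "\<Delta> \<ge> 2" and "\<epsilon> > 0"
  shows "\<not> (\<exists>(A :: ('s, 'm) algorithm) (T :: nat).
           \<forall>V E p col idf.
             graph_ok \<Delta> V E \<and> proper_2col V E col \<and> port_numbering V E p \<and> valid_ids V idf \<longrightarrow>
             dominating V E (local_output A \<Delta> V E p col idf T) \<and>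
             real (card (local_output A \<Delta> V E p col idf T))
               \<le> ((real \<Delta> + 1) / 2 - \<epsilon>) * real (domination_number V E))"
proof
  assume "\<exists>(A :: ('s, 'm) algorithm) (T :: nat).
           \<forall>V E p col idf.
             graph_ok \<Delta> V E \<and> proper_2col V E col \<and> port_numbering V E p \<and> valid_ids V idf \<longrightarrow>
             dominating V E (local_output A \<Delta> V E p col idf T) \<and>
             real (card (local_output A \<Delta> V E p col idf T))
               \<le> ((real \<Delta> + 1) / 2 - \<epsilon>) * real (domination_number V E)"
  then obtain A :: "('s, 'm) algorithm" and T :: nat where P: "\<forall>V E p col idf.
             graph_ok \<Delta> V E \<and> proper_2col V E col \<and> port_numbering V E p \<and> valid_ids V idf \<longrightarrow>
             dominating V E (local_output A \<Delta> V E p col idf T) \<and>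
             real (card (local_output A \<Delta> V E p col idf T))
               \<le> ((real \<Delta> + 1) / 2 - \<epsilon>) * real (domination_number V E)" by blast
  define e where "e = min \<epsilon> 1"
  have e: "0 < e" "e \<le> 1" "e \<le> \<epsilon>" using assms(2) unfolding e_def by auto
  have H: "\<forall>V E p col idf.
             graph_ok \<Delta> V E \<and> proper_2col V E col \<and> port_numbering V E p \<and> valid_ids V idf \<longrightarrow>
             dominating V E (local_output A \<Delta> V E p col idf T) \<and>
             real (card (local_output A \<Delta> V E p col idf T))
               \<le> ((real \<Delta> + 1) / 2 - e) * real (domination_number V E)"
  proof (intro allI impI)
    fix V E p col idf
    assume a: "graph_ok \<Delta> V E \<and> proper_2col V E col \<and> port_numbering V E p \<and> valid_ids V idf"
    have "((real \<Delta> + 1) / 2 - \<epsilon>) * real (domination_number V E) \<le> ((real \<Delta> + 1) / 2 - e) * real (domination_number V E)"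
      using e(3) by (intro mult_right_mono) auto
    then show "dominating V E (local_output A \<Delta> V E p col idf T) \<and>
             real (card (local_output A \<Delta> V E p col idf T))
               \<le> ((real \<Delta> + 1) / 2 - e) * real (domination_number V E)"
      using P a by (meson order_trans)
  qed
  show False using no_alg[OF assms(1) e(1,2) H] .
qed

end
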